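(* Consider the one-hop wireless network model described in the context, with $n$ source-destination pairs and i.i.d. channel powers $\gamma_{i,j}$ with c.d.f. $F$ and mean $\mu$. Suppose $F$ satisfies condition set 1 and is of NHT type or of HT type (as defined in the context). Define $$G(x)\triangleq \frac{x}{1-F\left(\beta\mu x/2\right)},$$ where $\beta$ is the SINR target. Then, with high probability (i.e., with probability tending to $1$ as $n\to\infty$), the throughput of the network is lower bounded as $$T=\Omega\left(G^{-1}(n)\right),$$ this throughput being achieved by activating the source-destination pairs with the largest direct-link powers $\gamma_{i,i}$ and keeping all other sources silent.
   Context: Network model: there are $n$ sources $S_1,\dots,S_n$ and $n$ destinations $D_1,\dots,D_n$; $S_i$ wishes to communicate with $D_i$ in a single hop. The channel power gain from $S_i$ to $D_j$ is a random variable $\gamma_{i,j}\ge 0$; all $\gamma_{i,j}$, $i,j=1,\dots,n$, are i.i.d. with p.d.f. $f$, c.d.f. $F$, and mean $\mathbb{E}\{\gamma_{i,j}\}=\mu$. In a time slot a subset $\mathbb{S}\subset\{S_1,\dots,S_n\}$ of sources is active, each transmitting with power $1$; the others are silent. The SINR at $D_i$ is $SINR_i=\frac{\gamma_{i,i}}{N_0+\sum_{S_k\in\mathbb{S},k\ne i}\gamma_{k,i}}$ if $S_i\in\mathbb{S}$ (and $0$ otherwise), where $N_0\ge 0$ is the noise variance; $D_i$ is successful if $SINR_i>\beta$ for a fixed constant $\beta>0$. The throughput $T(\mathbb{S})$ is the number of successful destinations. An event holds with high probability (w.h.p.) if its probability tends to $1$ as $n\to\infty$. $\Omega$ is the usual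 asymptotic notation as $n\to\infty$. Condition set 1: with $h(x)\triangleq f(x)/(1-F(x))$, (i) $F^{-1}(1)=\infty$ (unbounded support), and (ii) either $\lim_{x\to\infty} x h(x)=c_0>0$ for some constant $c_0$, or $\lim_{x\to\infty}\frac{d}{dx}\frac{1}{h(x)}=0$. NHT (non-heavy-tailed, super-exponential) type: a random variable $X$ with c.d.f. $F$ satisfies $\mathbb{E}\{e^{sX}\}<\infty$ for some $s>0$ (Cramér's condition). HT (heavy-tailed, sub-exponential) type: $F$ has one of the following tails: (a) regularly varying: $1-F(x)=L(x)/x^{\alpha}$ for $x>0$, with $\alpha>2$ and $L$ slowly varying; (b) log-normal type: $1-F(x)\sim c\,x^{b}e^{-\lambda(\log x)^{g}}$ as $x\to\infty$ with $g>1$, $\lambda>0$, $c>0$, $b\in\mathbb{R}$; (c) Weibull-like: $1-F(x)\sim c\,x^{b}e^{-\lambda x^{a}}$ as $x\to\infty$ with $0<a<0.5$, $\lambda>0$, $c>0$, $b\in\mathbb{R}$. *)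

theory Defs
  imports "HOL-Probability.Probability" "HOL-Library.Landau_Symbols"
begin

definition hazard :: "(real \<Rightarrow> real) \<Rightarrow> (real \<Rightarrow> real) \<Rightarrow> real \<Rightarrow> real" where
  "hazard f F x = f x / (1 - F x)"

text \<open>Condition set 1: (i) unbounded support, F^{-1}(1) = infinity, i.e. F x < 1 for all x;
 (ii) x h(x) tends to some c0 > 0, or d/dx (1/h(x)) tends to 0 as x tends to infinity.\<close>
definition condition_set_1 :: "(real \<Rightarrow> real) \<Rightarrow> (real \<Rightarrow> real) \<Rightarrow> bool" where
  "condition_set_1 f F \<longleftrightarrow>
     (\<forall>x. F x < 1) \<and>
     ((\<exists>c0>0. ((\<lambda>x. x * hazard f F x) \<longlongrightarrow> c0) at_top) \<or>
      (\<exists>d. (\<forall>\<^sub>F x in at_top. ((\<lambda>y. 1 / hazard f F y) has_real_derivative d x) (at x)) \<and>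
           (d \<longlongrightarrow> 0) at_top))"

definition slowly_varying :: "(real \<Rightarrow> real) \<Rightarrow> bool" where
  "slowly_varying L \<longleftrightarrow> (\<forall>\<^sub>F x in at_top. L x > 0) \<and>
     (\<forall>t>0. ((\<lambda>x. L (t * x) / L x) \<longlongrightarrow> 1) at_top)"

definition NHT_type :: "'a measure \<Rightarrow> ('a \<Rightarrow> real) \<Rightarrow> bool" where
  "NHT_type M X \<longleftrightarrow> (\<exists>s>0. integrable M (\<lambda>\<omega>. exp (s * X \<omega>)))"

definition HT_type :: "(real \<Rightarrow> real) \<Rightarrow> bool" where
  "HT_type F \<longleftrightarrow>
     (\<exists>\<alpha> L. \<alpha> > 2 \<and> slowly_varying L \<and> (\<forall>x>0. 1 - F x = L x / x powr \<alpha>)) \<or>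
     (\<exists>c b lam g. c > 0 \<and> lam > 0 \<and> g > 1 \<and>
        (\<lambda>x. 1 - F x) \<sim>[at_top] (\<lambda>x. c * x powr b * exp (- lam * (ln x) powr g))) \<or>
     (\<exists>c b lam a. c > 0 \<and> lam > 0 \<and> 0 < a \<and> a < 0.5 \<and>
        (\<lambda>x. 1 - F x) \<sim>[at_top] (\<lambda>x. c * x powr b * exp (- lam * x powr a)))"

text \<open>Throughput of active set S: number of i in S with SINR_i > beta, where
  SINR_i = gamma i i / (N0 + sum_{k in S, k ~= i} gamma k i); written multiplicatively
  (SINR_i > beta iff gamma i i > beta * (N0 + interference)) to avoid division by zero.\<close>
definition throughput :: "(nat \<Rightarrow> nat \<Rightarrow> real) \<Rightarrow> real \<Rightarrow> real \<Rightarrow> nat set \<Rightarrow> nat" where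
  "throughput g N0 \<beta> S = card {i \<in> S. g i i > \<beta> * (N0 + (\<Sum>k\<in>S - {i}. g k i))}"

definition top_set :: "(nat \<Rightarrow> nat \<Rightarrow> real) \<Rightarrow> nat \<Rightarrow> nat \<Rightarrow> nat set \<Rightarrow> bool" where
  "top_set g n k S \<longleftrightarrow> S \<subseteq> {..<n} \<and> card S = k \<and>
     (\<forall>i\<in>S. \<forall>j\<in>{..<n} - S. g j j \<le> g i i)"

definition Gfun :: "(real \<Rightarrow> real) \<Rightarrow> real \<Rightarrow> real \<Rightarrow> real \<Rightarrow> real" where
  "Gfun F \<beta> \<mu> x = x / (1 - F (\<beta> * \<mu> * x / 2))"

definition Ginv :: "(real \<Rightarrow> real) \<Rightarrow> real \<Rightarrow> real \<Rightarrow> real \<Rightarrow> real" where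
  "Ginv F \<beta> \<mu> y = Inf {x. x \<ge> 0 \<and> Gfun F \<beta> \<mu> x \<ge> y}"

end

theory Submission
  imports Defs
begin


context prob_space begin

lemma indep_var_prob:
  assumes "indep_var S X T Y" "U \<in> sets S" "V \<in> sets T"
  shows "prob ({\<omega>\<in>space M. X \<omega> \<in> U} \<inter> {\<omega>\<in>space M. Y \<omega> \<in> V}) =
         prob {\<omega>\<in>space M. X \<omega> \<in> U} * prob {\<omega>\<in>space M. Y \<omega> \<in> V}"
proof -
  have "indep_set (sigma_sets (space M) { X -` A \<inter> space M | A. A \<in> sets S})
      (sigma_sets (space M) { Y -` A \<inter> space M | A. A \<in> sets T})"
    using assms(1) indep_var_eq by blast
  then have H: "\<forall>a\<in>sigma_sets (space M) { X -` A \<inter> space M | A. A \<in> sets S}.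
      \<forall>b\<in>sigma_sets (space M) { Y -` A \<inter> space M | A. A \<in> sets T}. prob (a \<inter> b) = prob a * prob b"
    using indep_sets2_eq by blast
  have m1: "X -` U \<inter> space M \<in> sigma_sets (space M) { X -` A \<inter> space M | A. A \<in> sets S}"
    using assms(2) by (intro sigma_sets.Basic) blast
  have m2: "Y -` V \<inter> space M \<in> sigma_sets (space M) { Y -` A \<inter> space M | A. A \<in> sets T}"
    using assms(3) by (intro sigma_sets.Basic) blast
  have e: "{\<omega>\<in>space M. X \<omega> \<in> U} = X -` U \<inter> space M" "{\<omega>\<in>space M. Y \<omega> \<in> V} = Y -` V \<inter> space M"
    by auto
  show ?thesis unfolding e by (rule H[rule_format, OF m1 m2])
qed

lemma mgf_indicators:
  fixes Y :: "'i \<Rightarrow> 'a \<Rightarrow> real"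
  assumes I: "finite I" and ind: "indep_vars (\<lambda>_. borel) Y I"
    and b: "\<And>i \<omega>. i \<in> I \<Longrightarrow> Y i \<omega> = 0 \<or> Y i \<omega> = 1"
  shows "expectation (\<lambda>\<omega>. exp (s * (\<Sum>i\<in>I. Y i \<omega>))) =
     (\<Prod>i\<in>I. 1 + (exp s - 1) * prob {\<omega>\<in>space M. Y i \<omega> = 1})"
proof -
  have rv: "\<And>i. i \<in> I \<Longrightarrow> Y i \<in> borel_measurable M"
    using ind by (auto simp: indep_vars_def)
  have ind2: "indep_vars (\<lambda>_. borel) (\<lambda>i \<omega>. exp (s * Y i \<omega>)) I"
    by (rule indep_vars_compose2[OF ind]) auto
  have ev: "\<And>i. i \<in> I \<Longrightarrow> {\<omega>\<in>space M. Y i \<omega> = 1} \<in> events"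
    using rv by measurable
  have fin: "\<And>A. emeasure M A < top" by (simp add: less_top[symmetric])
  have eq: "\<And>i \<omega>. i \<in> I \<Longrightarrow> \<omega> \<in> space M \<Longrightarrow> exp (s * Y i \<omega>) = 1 + (exp s - 1) * indicator {\<omega>\<in>space M. Y i \<omega> = 1} \<omega>"
  proof -
    fix i \<omega> assume "i \<in> I" "\<omega> \<in> space M"
    then show "exp (s * Y i \<omega>) = 1 + (exp s - 1) * indicator {\<omega>\<in>space M. Y i \<omega> = 1} \<omega>"
      using b[of i \<omega>] by (auto simp: indicator_def)
  qed
  have int: "\<And>i. i \<in> I \<Longrightarrow> integrable M (\<lambda>\<omega>. exp (s * Y i \<omega>))"
  proof -
    fix i assume i: "i \<in> I"
    have "integrable M (\<lambda>\<omega>. 1 + (exp s - 1) * indicator {\<omega>\<in>space M. Y i \<omega> = 1} \<omega>)"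
      using ev[OF i] fin by (intro Bochner_Integration.integrable_add integrable_mult_right integrable_real_indicator) auto
    moreover have "integrable M (\<lambda>\<omega>. 1 + (exp s - 1) * indicator {\<omega>\<in>space M. Y i \<omega> = 1} \<omega>) \<longleftrightarrow> integrable M (\<lambda>\<omega>. exp (s * Y i \<omega>))"
      by (rule Bochner_Integration.integrable_cong) (use eq i in auto)
    ultimately show "integrable M (\<lambda>\<omega>. exp (s * Y i \<omega>))" by simp
  qed
  have "(\<lambda>\<omega>. exp (s * (\<Sum>i\<in>I. Y i \<omega>))) = (\<lambda>\<omega>. \<Prod>i\<in>I. exp (s * Y i \<omega>))"
    by (simp add: sum_distrib_left exp_sum[OF I])
  then have "expectation (\<lambda>\<omega>. exp (s * (\<Sum>i\<in>I. Y i \<omega>))) = (\<Prod>i\<in>I. expectation (\<lambda>\<omega>. exp (s * Y i \<omega>)))"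
    using indep_vars_lebesgue_integral[OF I ind2 int] by simp
  also have "\<dots> = (\<Prod>i\<in>I. 1 + (exp s - 1) * prob {\<omega>\<in>space M. Y i \<omega> = 1})"
  proof (rule prod.cong[OF refl])
    fix i assume i: "i \<in> I"
    have "expectation (\<lambda>\<omega>. exp (s * Y i \<omega>)) = expectation (\<lambda>\<omega>. 1 + (exp s - 1) * indicator {\<omega>\<in>space M. Y i \<omega> = 1} \<omega>)"
      by (rule Bochner_Integration.integral_cong) (use eq i in auto)
    also have "\<dots> = 1 + (exp s - 1) * prob {\<omega>\<in>space M. Y i \<omega> = 1}"
      using ev[OF i] fin[of "{\<omega>\<in>space M. Y i \<omega> = 1}"] by (subst Bochner_Integration.integral_add) (auto simp: prob_space)
    finally show "expectation (\<lambda>\<omega>. exp (s * Y i \<omega>)) = 1 + (exp s - 1) * prob {\<omega>\<in>space M. Y i \<omega> = 1}" .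
  qed
  finally show ?thesis .
qed

lemma chernoff_upper:
  fixes Y :: "'i \<Rightarrow> 'a \<Rightarrow> real"
  assumes I: "finite I" and ind: "indep_vars (\<lambda>_. borel) Y I"
    and b: "\<And>i \<omega>. i \<in> I \<Longrightarrow> Y i \<omega> = 0 \<or> Y i \<omega> = 1"
    and p: "\<And>i. i \<in> I \<Longrightarrow> prob {\<omega>\<in>space M. Y i \<omega> = 1} \<le> 1/8"
  shows "prob {\<omega>\<in>space M. real (card I) / 2 \<le> (\<Sum>i\<in>I. Y i \<omega>)} \<le> exp (- real (card I) / 4)"
proof -
  have rv[measurable]: "\<And>i. i \<in> I \<Longrightarrow> Y i \<in> borel_measurable M"
    using ind by (auto simp: indep_vars_def)
  have Yle: "\<And>i \<omega>. i \<in> I \<Longrightarrow> Y i \<omega> \<le> 1" using b by (metis order_refl zero_le_one)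
  have sle: "\<And>\<omega>. (\<Sum>i\<in>I. Y i \<omega>) \<le> real (card I)"
  proof -
    fix \<omega>
    have "(\<Sum>i\<in>I. Y i \<omega>) \<le> (\<Sum>i\<in>I. 1)" by (rule sum_mono) (rule Yle)
    then show "(\<Sum>i\<in>I. Y i \<omega>) \<le> real (card I)" by simp
  qed
  define W where "W = (\<lambda>\<omega>. exp (1 * (\<Sum>i\<in>I. Y i \<omega>)))"
  have Wm: "W \<in> borel_measurable M" unfolding W_def using I by measurable
  have Wint: "integrable M W"
  proof (rule integrable_const_bound[where B="exp (real (card I))"])
    show "AE x in M. norm (W x) \<le> exp (real (card I))"
      using sle by (auto simp: W_def)
  qed (rule Wm)
  have "prob {\<omega>\<in>space M. exp (real (card I) / 2) \<le> W \<omega>} \<le> expectation W / exp (real (card I) / 2)"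
    by (rule integral_Markov_inequality_measure[OF Wint, of "space M"]) (auto simp: W_def)
  moreover have "{\<omega>\<in>space M. real (card I) / 2 \<le> (\<Sum>i\<in>I. Y i \<omega>)} = {\<omega>\<in>space M. exp (real (card I) / 2) \<le> W \<omega>}"
    by (auto simp: W_def)
  moreover have "expectation W \<le> exp (real (card I) * ((exp 1 - 1) / 8))"
  proof -
    have "expectation W = (\<Prod>i\<in>I. 1 + (exp 1 - 1) * prob {\<omega>\<in>space M. Y i \<omega> = 1})"
      unfolding W_def by (rule mgf_indicators[OF I ind b]) auto
    also have "\<dots> \<le> (\<Prod>i\<in>I. exp ((exp 1 - 1) / 8))"
    proof (rule prod_mono, safe)
      fix i assume i: "i \<in> I"
      have e1: "0 \<le> exp 1 - (1::real)" by simp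
      show "0 \<le> 1 + (exp 1 - 1) * prob {\<omega>\<in>space M. Y i \<omega> = 1}"
        using e1 by (simp add: add_nonneg_nonneg)
      have "1 + (exp 1 - 1) * prob {\<omega>\<in>space M. Y i \<omega> = 1} \<le> 1 + (exp 1 - 1) / 8"
        using mult_left_mono[OF p[OF i] e1] by simp
      also have "\<dots> \<le> exp ((exp 1 - 1) / 8)" by (rule exp_ge_add_one_self)
      finally show "1 + (exp 1 - 1) * prob {\<omega>\<in>space M. Y i \<omega> = 1} \<le> exp ((exp 1 - 1) / 8)" .
    qed
    also have "\<dots> = exp (real (card I) * ((exp 1 - 1) / 8))"
      by (simp only: prod_constant exp_of_nat_mult)
    finally show ?thesis .
  qed
  ultimately have "prob {\<omega>\<in>space M. real (card I) / 2 \<le> (\<Sum>i\<in>I. Y i \<omega>)} \<le>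
     exp (real (card I) * ((exp 1 - 1) / 8)) / exp (real (card I) / 2)"
    by (metis (no_types, lifting) divide_right_mono exp_ge_zero order_trans)
  also have "\<dots> = exp (real (card I) * ((exp 1 - 1) / 8) - real (card I) / 2)"
    by (simp add: exp_diff)
  also have "\<dots> \<le> exp (- real (card I) / 4)"
  proof -
    have "real (card I) * ((exp 1 - 1) / 8) \<le> real (card I) * (1 / 4)"
      using exp_le by (intro mult_left_mono) auto
    then show ?thesis by simp
  qed
  finally show ?thesis .
qed

lemma chernoff_lower:
  fixes Y :: "'i \<Rightarrow> 'a \<Rightarrow> real"
  assumes I: "finite I" and ind: "indep_vars (\<lambda>_. borel) Y I"
    and b: "\<And>i \<omega>. i \<in> I \<Longrightarrow> Y i \<omega> = 0 \<or> Y i \<omega> = 1"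
    and p: "\<And>i. i \<in> I \<Longrightarrow> prob {\<omega>\<in>space M. Y i \<omega> = 1} \<ge> q"
    and q: "0 \<le> q" and k: "0 \<le> k" and mq: "4 * k \<le> real (card I) * q"
  shows "prob {\<omega>\<in>space M. (\<Sum>i\<in>I. Y i \<omega>) < k} \<le> exp (- k)"
proof -
  have rv[measurable]: "\<And>i. i \<in> I \<Longrightarrow> Y i \<in> borel_measurable M"
    using ind by (auto simp: indep_vars_def)
  have Yge: "\<And>i \<omega>. i \<in> I \<Longrightarrow> 0 \<le> Y i \<omega>" using b by (metis order_refl zero_le_one)
  have sge: "\<And>\<omega>. 0 \<le> (\<Sum>i\<in>I. Y i \<omega>)"
    using Yge by (simp add: sum_nonneg)
  define W where "W = (\<lambda>\<omega>. exp ((-1) * (\<Sum>i\<in>I. Y i \<omega>)))"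
  have Wm: "W \<in> borel_measurable M" unfolding W_def using I by measurable
  have Wint: "integrable M W"
  proof (rule integrable_const_bound[where B="1"])
    show "AE x in M. norm (W x) \<le> 1"
      using sge by (auto simp: W_def)
  qed (rule Wm)
  have "prob {\<omega>\<in>space M. exp (- k) \<le> W \<omega>} \<le> expectation W / exp (- k)"
    by (rule integral_Markov_inequality_measure[OF Wint, of "space M"]) (auto simp: W_def)
  moreover have "{\<omega>\<in>space M. (\<Sum>i\<in>I. Y i \<omega>) < k} \<subseteq> {\<omega>\<in>space M. exp (- k) \<le> W \<omega>}"
    by (auto simp: W_def)
  then have "prob {\<omega>\<in>space M. (\<Sum>i\<in>I. Y i \<omega>) < k} \<le> prob {\<omega>\<in>space M. exp (- k) \<le> W \<omega>}"
    by (intro finite_measure_mono) (use Wm in measurable)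
  moreover have "expectation W \<le> exp (- real (card I) * ((1 - exp (-1)) * q))"
  proof -
    have "expectation W = (\<Prod>i\<in>I. 1 + (exp (-1) - 1) * prob {\<omega>\<in>space M. Y i \<omega> = 1})"
      unfolding W_def by (rule mgf_indicators[OF I ind b]) auto
    also have "\<dots> \<le> (\<Prod>i\<in>I. exp (- ((1 - exp (-1)) * q)))"
    proof (rule prod_mono, safe)
      fix i assume i: "i \<in> I"
      have e1: "0 \<le> 1 - exp (-1::real)" by simp
      have e2: "1 - exp (-1::real) \<le> 1" by simp
      have pr: "prob {\<omega>\<in>space M. Y i \<omega> = 1} \<le> 1" by simp
      show "0 \<le> 1 + (exp (-1) - 1) * prob {\<omega>\<in>space M. Y i \<omega> = 1}"
        using mult_mono[OF e2 pr] e1 by (simp add: algebra_simps)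
      have "1 + (exp (-1) - 1) * prob {\<omega>\<in>space M. Y i \<omega> = 1} \<le> 1 + (- ((1 - exp (-1)) * q))"
        using mult_left_mono[OF p[OF i] e1] by (simp add: algebra_simps)
      also have "\<dots> \<le> exp (- ((1 - exp (-1)) * q))" by (rule exp_ge_add_one_self)
      finally show "1 + (exp (-1) - 1) * prob {\<omega>\<in>space M. Y i \<omega> = 1} \<le> exp (- ((1 - exp (-1)) * q))" .
    qed
    also have "\<dots> = exp (real (card I) * (- ((1 - exp (-1)) * q)))"
      by (simp only: prod_constant exp_of_nat_mult)
    also have "\<dots> = exp (- real (card I) * ((1 - exp (-1)) * q))"
      by simp
    finally show ?thesis .
  qed
  ultimately have "prob {\<omega>\<in>space M. (\<Sum>i\<in>I. Y i \<omega>) < k} \<le>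
     exp (- real (card I) * ((1 - exp (-1)) * q)) / exp (- k)"
    by (metis (no_types, lifting) divide_right_mono exp_ge_zero order_trans)
  also have "\<dots> = exp (- real (card I) * ((1 - exp (-1)) * q) + k)"
    by (simp add: exp_diff[symmetric])
  also have "\<dots> \<le> exp (- k)"
  proof -
    have "exp (-1::real) \<le> 1/2"
    proof -
      have "2 \<le> exp (1::real)" using exp_ge_add_one_self[of 1] by simp
      then show ?thesis by (simp add: exp_minus field_simps)
    qed
    then have "1/2 \<le> 1 - exp (-1::real)" by simp
    then have "real (card I) * q * (1/2) \<le> real (card I) * q * (1 - exp (-1))"
      using q by (intro mult_left_mono) auto
    moreover have "- real (card I) * ((1 - exp (-1)) * q) = - (real (card I) * q * (1 - exp (-1)))"
      by (simp add: algebra_simps)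
    ultimately have "- real (card I) * ((1 - exp (-1)) * q) + k \<le> - k"
      using mq by linarith
    then show ?thesis by simp
  qed
  finally show ?thesis .
qed

lemma indep_groups:
  fixes X :: "'j \<Rightarrow> 'a \<Rightarrow> real"
  assumes ind: "indep_vars (\<lambda>_. borel) X UNIV" and disj: "disjoint_family_on K L"
    and h: "\<And>l. l \<in> L \<Longrightarrow> h l \<in> borel_measurable (PiM (K l) (\<lambda>_. borel))"
  shows "indep_vars (\<lambda>_. borel) (\<lambda>l \<omega>. h l (restrict (\<lambda>j. X j \<omega>) (K l))) L"
  using indep_vars_compose2[OF indep_vars_restrict[OF ind _ disj] h] by simp

lemma prob_eq_zero:
  fixes X Y :: "'a \<Rightarrow> real"
  assumes ind: "indep_var borel X borel Y" and dist: "distributed M lborel Y f"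
  shows "prob {\<omega>\<in>space M. X \<omega> = Y \<omega>} = 0"
proof -
  have rvX[measurable]: "X \<in> borel_measurable M" and rvY[measurable]: "Y \<in> borel_measurable M"
    using ind indep_var_distribution_eq by blast+
  have eqd: "distr M borel X \<Otimes>\<^sub>M distr M borel Y = distr M (borel \<Otimes>\<^sub>M borel) (\<lambda>x. (X x, Y x))"
    using ind indep_var_distribution_eq by blast
  define D where "D = {p \<in> space (borel \<Otimes>\<^sub>M borel). fst p = (snd p :: real)}"
  have Dm: "D \<in> sets (borel \<Otimes>\<^sub>M borel)" unfolding D_def by measurable
  interpret PY: prob_space "distr M borel Y" by (rule prob_space_distr) simp
  have single: "\<And>x. emeasure (distr M borel Y) {x} = 0"
  proof -
    fix x :: real
    have "emeasure (distr M borel Y) {x} = emeasure M (Y -` {x} \<inter> space M)"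
      by (rule emeasure_distr) auto
    also have "\<dots> = (\<integral>\<^sup>+y. f y * indicator {x} y \<partial>lborel)"
      by (rule distributed_emeasure[OF dist]) simp
    also have "\<dots> = 0"
    proof -
      have "AE y in lborel. f y * indicator {x} y = (0::ennreal)"
        using AE_lborel_singleton[of x] by eventually_elim simp
      then show ?thesis using nn_integral_cong_AE by fastforce
    qed
    finally show "emeasure (distr M borel Y) {x} = 0" by simp
  qed
  have "emeasure M {\<omega>\<in>space M. X \<omega> = Y \<omega>} = emeasure (distr M (borel \<Otimes>\<^sub>M borel) (\<lambda>x. (X x, Y x))) D"
  proof -
    have "{\<omega>\<in>space M. X \<omega> = Y \<omega>} = (\<lambda>x. (X x, Y x)) -` D \<inter> space M"
      by (auto simp: D_def space_pair_measure)
    moreover have meas: "(\<lambda>x. (X x, Y x)) \<in> measurable M (borel \<Otimes>\<^sub>M borel)" by measurable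
    ultimately show ?thesis using emeasure_distr[OF meas Dm] by simp
  qed
  also have "\<dots> = emeasure (distr M borel X \<Otimes>\<^sub>M distr M borel Y) D"
    by (simp add: eqd)
  also have "\<dots> = (\<integral>\<^sup>+ x. emeasure (distr M borel Y) (Pair x -` D) \<partial>distr M borel X)"
  proof -
    have Dm2: "D \<in> sets (distr M borel X \<Otimes>\<^sub>M distr M borel Y)"
      by (subst sets_pair_measure_cong[OF sets_distr sets_distr]) (rule Dm)
    show ?thesis by (rule PY.emeasure_pair_measure_alt[OF Dm2])
  qed
  also have "\<dots> = (\<integral>\<^sup>+ x. 0 \<partial>distr M borel X)"
  proof (rule nn_integral_cong)
    fix x assume "x \<in> space (distr M borel X)"
    have "Pair x -` D = {x}" by (auto simp: D_def space_pair_measure)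
    then show "emeasure (distr M borel Y) (Pair x -` D) = 0" using single by simp
  qed
  finally show ?thesis by (simp add: measure_def)
qed

lemma markov_sum:
  fixes Z :: "'j \<Rightarrow> 'a \<Rightarrow> real"
  assumes J: "finite J" and int: "\<And>j. j \<in> J \<Longrightarrow> integrable M (Z j)"
    and nn: "\<And>j \<omega>. 0 \<le> Z j \<omega>" and mu: "\<And>j. j \<in> J \<Longrightarrow> expectation (Z j) = \<mu>" and t: "0 < t"
  shows "prob {\<omega>\<in>space M. t \<le> (\<Sum>j\<in>J. Z j \<omega>)} \<le> real (card J) * \<mu> / t"
proof -
  have "integrable M (\<lambda>\<omega>. \<Sum>j\<in>J. Z j \<omega>)" using int by auto
  then have "prob {\<omega>\<in>space M. t \<le> (\<Sum>j\<in>J. Z j \<omega>)} \<le> expectation (\<lambda>\<omega>. \<Sum>j\<in>J. Z j \<omega>) / t"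
    by (rule integral_Markov_inequality_measure[of _ _ "space M"]) (use nn t in \<open>auto intro: sum_nonneg\<close>)
  also have "expectation (\<lambda>\<omega>. \<Sum>j\<in>J. Z j \<omega>) = real (card J) * \<mu>"
    using int mu by (subst Bochner_Integration.integral_sum) auto
  finally show ?thesis .
qed

end


lemma card_filter_sum:
  assumes "finite S"
  shows "(\<Sum>i\<in>S. if P i then 1 else 0 :: real) = real (card {i\<in>S. P i})"
  using sum.inter_filter[OF assms, of "\<lambda>_. (1::real)" P] by simp

context prob_space begin

lemma indep_pair_vars:
  fixes X :: "'j \<Rightarrow> 'a \<Rightarrow> real"
  assumes ind: "indep_vars (\<lambda>_. borel) X UNIV" and ab: "a \<noteq> b"
  shows "indep_var borel (X a) borel (X b)"
proof -
  have "indep_var borel ((\<lambda>f. f a) \<circ> (\<lambda>\<omega>. restrict (\<lambda>p. X p \<omega>) {a}))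
                  borel ((\<lambda>f. f b) \<circ> (\<lambda>\<omega>. restrict (\<lambda>p. X p \<omega>) {b}))"
    by (rule indep_var_compose[OF indep_var_restrict[OF ind]]) (use ab in auto)
  moreover have "(\<lambda>f. f a) \<circ> (\<lambda>\<omega>. restrict (\<lambda>p. X p \<omega>) {a}) = X a" by (auto simp: fun_eq_iff)
  moreover have "(\<lambda>f. f b) \<circ> (\<lambda>\<omega>. restrict (\<lambda>p. X p \<omega>) {b}) = X b" by (auto simp: fun_eq_iff)
  ultimately show ?thesis by simp
qed

lemma main_bound:
  fixes \<gamma> :: "nat \<Rightarrow> nat \<Rightarrow> 'a \<Rightarrow> real"
  assumes ind: "indep_vars (\<lambda>_. borel) (\<lambda>(i, j). \<gamma> i j) UNIV"
    and nonneg: "\<And>i j \<omega>. \<gamma> i j \<omega> \<ge> 0"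
    and dens: "\<And>i j. distributed M lborel (\<gamma> i j) (\<lambda>x. ennreal (f x))"
    and cdf: "\<And>i j x. prob {\<omega>\<in>space M. \<gamma> i j \<omega> \<le> x} = F x"
    and integ: "\<And>i j. integrable M (\<gamma> i j)"
    and mean: "\<And>i j. expectation (\<gamma> i j) = \<mu>"
    and mu: "\<mu> > 0" and beta: "\<beta> \<ge> 0" and k1: "1 \<le> k"
    and th: "\<theta> = \<beta> * (N0 + 8 * real k * \<mu>)"
    and nF: "4 * real k \<le> real n * (1 - F \<theta>)"
    and cG: "C \<le> real k / 2"
  defines "Good \<equiv> {\<omega>\<in>space M. \<forall>S. top_set (\<lambda>i j. \<gamma> i j \<omega>) n k S \<longrightarrow> C \<le> real (throughput (\<lambda>i j. \<gamma> i j \<omega>) N0 \<beta> S)}"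
  shows "Good \<in> events \<and> 1 - exp (- real k) - exp (- real k / 4) \<le> prob Good"
proof -
  define X where "X = (\<lambda>(i, j). \<gamma> i j)"
  have indX: "indep_vars (\<lambda>_. borel) X UNIV" using ind by (simp add: X_def)
  have rv[measurable]: "\<And>i j. \<gamma> i j \<in> borel_measurable M"
  proof -
    fix i j
    have "X (i,j) \<in> borel_measurable M" using indX by (auto simp: indep_vars_def)
    then show "\<gamma> i j \<in> borel_measurable M" by (simp add: X_def)
  qed
  define Pthr where "Pthr = (\<lambda>\<omega> S. (\<Sum>i\<in>S. if \<beta> * (N0 + (\<Sum>k\<in>S-{i}. \<gamma> k i \<omega>)) < \<gamma> i i \<omega> then 1 else (0::real)))"
  have thr: "\<And>\<omega> S. finite S \<Longrightarrow> real (throughput (\<lambda>i j. \<gamma> i j \<omega>) N0 \<beta> S) = Pthr \<omega> S"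
    by (simp add: throughput_def Pthr_def card_filter_sum)
  define Q where "Q = (\<lambda>\<omega> S. S \<subseteq> {..<n} \<and> card S = k \<and> (\<forall>i\<in>S. \<forall>j\<in>{..<n}-S. \<gamma> j j \<omega> \<le> \<gamma> i i \<omega>))"
  have Qtop: "\<And>\<omega> S. top_set (\<lambda>i j. \<gamma> i j \<omega>) n k S \<longleftrightarrow> Q \<omega> S"
    unfolding Q_def top_set_def by blast
  have Good_eq: "Good = space M \<inter> (\<Inter>S\<in>Pow {..<n}. {\<omega>\<in>space M. Q \<omega> S \<longrightarrow> C \<le> Pthr \<omega> S})"
  proof (intro equalityI subsetI)
    fix \<omega> assume w: "\<omega> \<in> Good"
    have "\<And>S. S \<in> Pow {..<n} \<Longrightarrow> Q \<omega> S \<Longrightarrow> C \<le> Pthr \<omega> S"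
    proof -
      fix S assume S: "S \<in> Pow {..<n}" and q: "Q \<omega> S"
      have fS: "finite S" using S by (auto intro: finite_subset)
      have "C \<le> real (throughput (\<lambda>i j. \<gamma> i j \<omega>) N0 \<beta> S)"
        using w q Qtop unfolding Good_def by blast
      then show "C \<le> Pthr \<omega> S" using thr[OF fS] by simp
    qed
    then show "\<omega> \<in> space M \<inter> (\<Inter>S\<in>Pow {..<n}. {\<omega>\<in>space M. Q \<omega> S \<longrightarrow> C \<le> Pthr \<omega> S})"
      using w unfolding Good_def by blast
  next
    fix \<omega> assume w: "\<omega> \<in> space M \<inter> (\<Inter>S\<in>Pow {..<n}. {\<omega>\<in>space M. Q \<omega> S \<longrightarrow> C \<le> Pthr \<omega> S})"
    have "\<And>S. top_set (\<lambda>i j. \<gamma> i j \<omega>) n k S \<Longrightarrow> C \<le> real (throughput (\<lambda>i j. \<gamma> i j \<omega>) N0 \<beta> S)"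
    proof -
      fix S assume "top_set (\<lambda>i j. \<gamma> i j \<omega>) n k S"
      then have q: "Q \<omega> S" using Qtop by blast
      then have S: "S \<in> Pow {..<n}" unfolding Q_def by blast
      have fS: "finite S" using S by (auto intro: finite_subset)
      have "C \<le> Pthr \<omega> S" using w q S by blast
      then show "C \<le> real (throughput (\<lambda>i j. \<gamma> i j \<omega>) N0 \<beta> S)" using thr[OF fS] by simp
    qed
    then show "\<omega> \<in> Good" using w unfolding Good_def by blast
  qed
  have Good_m: "Good \<in> events"
  proof -
    have "\<And>S. S \<in> Pow {..<n} \<Longrightarrow> {\<omega>\<in>space M. Q \<omega> S \<longrightarrow> C \<le> Pthr \<omega> S} \<in> events"
    proof -
      fix S assume "S \<in> Pow {..<n}"
      then have fS: "finite S" by (auto intro: finite_subset)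
      show "{\<omega>\<in>space M. Q \<omega> S \<longrightarrow> C \<le> Pthr \<omega> S} \<in> events"
        unfolding Pthr_def Q_def using fS by measurable
    qed
    then have "(\<Inter>S\<in>Pow {..<n}. {\<omega>\<in>space M. Q \<omega> S \<longrightarrow> C \<le> Pthr \<omega> S}) \<in> events"
      by (intro sets.finite_INT) auto
    then show ?thesis unfolding Good_eq by (intro sets.Int sets.top)
  qed
  define Yd where "Yd = (\<lambda>i \<omega>. if \<theta> < \<gamma> i i \<omega> then 1 else (0::real))"
  define NA where "NA = {\<omega>\<in>space M. (\<Sum>i\<in>{..<n}. Yd i \<omega>) < real k}"
  define Ties where "Ties = (\<Union>i\<in>{..<n}. \<Union>j\<in>{..<n}-{i}. {\<omega>\<in>space M. \<gamma> i i \<omega> = \<gamma> j j \<omega>})"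
  define SS where "SS = {S. S \<subseteq> {..<n} \<and> card S = k}"
  define Dst where "Dst = (\<lambda>S. {\<omega>\<in>space M. \<forall>i\<in>S. \<forall>j\<in>{..<n}-S. \<gamma> j j \<omega> < \<gamma> i i \<omega>})"
  define Bi where "Bi = (\<lambda>S i \<omega>. if 8 * real k * \<mu> \<le> (\<Sum>j\<in>S-{i}. \<gamma> j i \<omega>) then 1 else (0::real))"
  define Bad where "Bad = (\<lambda>S. {\<omega>\<in>space M. real k / 2 \<le> (\<Sum>i\<in>S. Bi S i \<omega>)})"
  have fSS: "finite SS" unfolding SS_def by (rule finite_subset[of _ "Pow {..<n}"]) auto
  have SSfin: "\<And>S. S \<in> SS \<Longrightarrow> finite S" unfolding SS_def by (auto intro: finite_subset)
  have NA_m: "NA \<in> events" unfolding NA_def Yd_def by measurable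
  have Ties_m: "Ties \<in> events" unfolding Ties_def by measurable
  have Dst_m: "\<And>S. S \<in> SS \<Longrightarrow> Dst S \<in> events" unfolding Dst_def using SSfin by measurable
  have Bad_m: "\<And>S. S \<in> SS \<Longrightarrow> Bad S \<in> events" unfolding Bad_def Bi_def using SSfin by measurable
  have incl: "space M - Good \<subseteq> NA \<union> Ties \<union> (\<Union>S\<in>SS. Dst S \<inter> Bad S)"
  proof
    fix \<omega> assume \<omega>: "\<omega> \<in> space M - Good"
    show "\<omega> \<in> NA \<union> Ties \<union> (\<Union>S\<in>SS. Dst S \<inter> Bad S)"
    proof (rule ccontr)
      assume nn: "\<omega> \<notin> NA \<union> Ties \<union> (\<Union>S\<in>SS. Dst S \<inter> Bad S)"
      have sp: "\<omega> \<in> space M" using \<omega> by auto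
      have notGood: "\<omega> \<notin> Good" using \<omega> by auto
      then obtain S where top: "top_set (\<lambda>i j. \<gamma> i j \<omega>) n k S"
          and low: "\<not> C \<le> real (throughput (\<lambda>i j. \<gamma> i j \<omega>) N0 \<beta> S)"
        using sp unfolding Good_def by blast
      from top have Sn: "S \<subseteq> {..<n}" and cS: "card S = k"
        and ord: "\<And>i j. i \<in> S \<Longrightarrow> j \<in> {..<n} - S \<Longrightarrow> \<gamma> j j \<omega> \<le> \<gamma> i i \<omega>"
        unfolding top_set_def by blast+
      have fS: "finite S" using Sn finite_subset by blast
      have SinSS: "S \<in> SS" using Sn cS by (simp add: SS_def)
      have noties: "\<And>i j. i < n \<Longrightarrow> j < n \<Longrightarrow> i \<noteq> j \<Longrightarrow> \<gamma> i i \<omega> \<noteq> \<gamma> j j \<omega>"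
        using nn sp unfolding Ties_def by blast
      have "\<And>i j. i \<in> S \<Longrightarrow> j \<in> {..<n} - S \<Longrightarrow> \<gamma> j j \<omega> < \<gamma> i i \<omega>"
      proof -
        fix i j assume i: "i \<in> S" and j: "j \<in> {..<n} - S"
        have "i \<noteq> j" using i j by blast
        moreover have "i < n" using i Sn by blast
        moreover have "j < n" using j by blast
        ultimately have "\<gamma> i i \<omega> \<noteq> \<gamma> j j \<omega>" using noties by blast
        then show "\<gamma> j j \<omega> < \<gamma> i i \<omega>" using ord[OF i j] by linarith
      qed
      then have "\<omega> \<in> Dst S" unfolding Dst_def using sp by blast
      then have "\<omega> \<notin> Bad S" using nn SinSS by blast
      then have sB: "(\<Sum>i\<in>S. Bi S i \<omega>) < real k / 2" using sp unfolding Bad_def by auto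
      have cT: "real k \<le> (\<Sum>i\<in>{..<n}. Yd i \<omega>)" using nn sp unfolding NA_def by auto
      have "(\<Sum>i\<in>{..<n}. Yd i \<omega>) = real (card {i\<in>{..<n}. \<theta> < \<gamma> i i \<omega>})"
        unfolding Yd_def by (rule card_filter_sum) simp
      then have cT2: "k \<le> card {i\<in>{..<n}. \<theta> < \<gamma> i i \<omega>}" using cT by simp
      have above: "\<And>i. i \<in> S \<Longrightarrow> \<theta> < \<gamma> i i \<omega>"
      proof (rule ccontr)
        fix i assume iS: "i \<in> S" and le: "\<not> \<theta> < \<gamma> i i \<omega>"
        have sub: "{i\<in>{..<n}. \<theta> < \<gamma> i i \<omega>} \<subseteq> S - {i}"
        proof
          fix j assume j: "j \<in> {i\<in>{..<n}. \<theta> < \<gamma> i i \<omega>}"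
          show "j \<in> S - {i}"
          proof (cases "j \<in> S")
            case True then show ?thesis using j le by auto
          next
            case False
            then have "\<gamma> j j \<omega> \<le> \<gamma> i i \<omega>" using ord[OF iS] j by auto
            then show ?thesis using j le by auto
          qed
        qed
        have "card {i\<in>{..<n}. \<theta> < \<gamma> i i \<omega>} \<le> card (S - {i})"
          using sub fS by (intro card_mono) auto
        also have "\<dots> < k" using cS iS fS k1 by (simp add: card_Diff_singleton)
        finally show False using cT2 by simp
      qed
      have succ: "{i\<in>S. Bi S i \<omega> = 0} \<subseteq> {i\<in>S. \<gamma> i i \<omega> > \<beta> * (N0 + (\<Sum>k\<in>S-{i}. \<gamma> k i \<omega>))}"
      proof
        fix i assume "i \<in> {i\<in>S. Bi S i \<omega> = 0}"
        then have iS: "i \<in> S" and b0: "Bi S i \<omega> = 0" by auto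
        then have lt: "(\<Sum>j\<in>S-{i}. \<gamma> j i \<omega>) < 8 * real k * \<mu>"
          unfolding Bi_def by (auto split: if_splits)
        have "\<beta> * (N0 + (\<Sum>j\<in>S-{i}. \<gamma> j i \<omega>)) \<le> \<theta>"
          unfolding th using lt beta by (intro mult_left_mono) auto
        then show "i \<in> {i\<in>S. \<gamma> i i \<omega> > \<beta> * (N0 + (\<Sum>k\<in>S-{i}. \<gamma> k i \<omega>))}"
          using above[OF iS] iS by auto
      qed
      have c1: "card {i\<in>S. Bi S i \<omega> = 0} \<le> throughput (\<lambda>i j. \<gamma> i j \<omega>) N0 \<beta> S"
        unfolding throughput_def using succ fS by (intro card_mono) auto
      define BB where "BB = {i\<in>S. 8 * real k * \<mu> \<le> (\<Sum>j\<in>S-{i}. \<gamma> j i \<omega>)}"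
      have s1: "(\<Sum>i\<in>S. Bi S i \<omega>) = real (card BB)"
        unfolding Bi_def BB_def by (rule card_filter_sum[OF fS])
      have s2: "{i\<in>S. Bi S i \<omega> = 0} = S - BB" by (auto simp: Bi_def BB_def)
      have s3: "card (S - BB) = card S - card BB" by (rule card_Diff_subset) (use fS in \<open>auto simp: BB_def intro: finite_subset\<close>)
      have s4: "card BB \<le> card S" using fS by (intro card_mono) (auto simp: BB_def)
      have "real (card {i\<in>S. Bi S i \<omega> = 0}) = real k - (\<Sum>i\<in>S. Bi S i \<omega>)"
        using s1 s2 s3 s4 cS by (simp add: of_nat_diff)
      moreover have "real (card {i\<in>S. Bi S i \<omega> = 0}) \<le> real (throughput (\<lambda>i j. \<gamma> i j \<omega>) N0 \<beta> S)"
        using c1 by (rule of_nat_mono)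
      ultimately have "real k / 2 < real (throughput (\<lambda>i j. \<gamma> i j \<omega>) N0 \<beta> S)"
        using sB by linarith
      then show False using low cG by linarith
    qed
  qed
  have Xeval: "\<And>i j \<omega>. X (i, j) \<omega> = \<gamma> i j \<omega>" by (simp add: X_def)
  have pNA: "prob NA \<le> exp (- real k)"
  proof -
    define hY where "hY = (\<lambda>i (g :: nat \<times> nat \<Rightarrow> real). if \<theta> < g (i, i) then 1 else (0::real))"
    have "indep_vars (\<lambda>_. borel) (\<lambda>l \<omega>. hY l (restrict (\<lambda>p. X p \<omega>) {(l, l)})) {..<n}"
    proof (rule indep_groups[OF indX])
      show "disjoint_family_on (\<lambda>l. {(l, l)}) {..<n}" by (auto simp: disjoint_family_on_def)
      fix l show "hY l \<in> borel_measurable (Pi\<^sub>M {(l, l)} (\<lambda>_. borel))" unfolding hY_def by measurable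
    qed
    moreover have "\<And>l. (\<lambda>\<omega>. hY l (restrict (\<lambda>p. X p \<omega>) {(l, l)})) = Yd l"
      by (auto simp: hY_def Yd_def X_def fun_eq_iff)
    ultimately have indY: "indep_vars (\<lambda>_. borel) Yd {..<n}" by simp
    have b: "\<And>i \<omega>. i \<in> {..<n} \<Longrightarrow> Yd i \<omega> = 0 \<or> Yd i \<omega> = 1" by (auto simp: Yd_def)
    have p: "\<And>i. i \<in> {..<n} \<Longrightarrow> prob {\<omega>\<in>space M. Yd i \<omega> = 1} \<ge> 1 - F \<theta>"
    proof -
      fix i
      have "{\<omega>\<in>space M. Yd i \<omega> = 1} = space M - {\<omega>\<in>space M. \<gamma> i i \<omega> \<le> \<theta>}"
        by (auto simp: Yd_def)
      moreover have "{\<omega>\<in>space M. \<gamma> i i \<omega> \<le> \<theta>} \<in> events" by measurable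
      ultimately have "prob {\<omega>\<in>space M. Yd i \<omega> = 1} = 1 - F \<theta>"
        using prob_compl cdf by simp
      then show "prob {\<omega>\<in>space M. Yd i \<omega> = 1} \<ge> 1 - F \<theta>" by simp
    qed
    have q: "0 \<le> 1 - F \<theta>" using cdf[of 0 0 \<theta>, symmetric] by simp
    have "prob {\<omega>\<in>space M. (\<Sum>i\<in>{..<n}. Yd i \<omega>) < real k} \<le> exp (- real k)"
      by (rule chernoff_lower[OF finite_lessThan indY b p q]) (use nF in auto)
    then show ?thesis unfolding NA_def .
  qed
  have pTies: "prob Ties = 0"
  proof -
    have z: "\<And>i j. i \<noteq> j \<Longrightarrow> prob {\<omega>\<in>space M. \<gamma> i i \<omega> = \<gamma> j j \<omega>} = 0"
    proof -
      fix i j :: nat assume ij: "i \<noteq> j"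
      have "indep_var borel (X (i,i)) borel (X (j,j))"
        by (rule indep_pair_vars[OF indX]) (use ij in simp)
      then have "indep_var borel (\<gamma> i i) borel (\<gamma> j j)" by (simp add: X_def)
      then show "prob {\<omega>\<in>space M. \<gamma> i i \<omega> = \<gamma> j j \<omega>} = 0"
        by (rule prob_eq_zero[OF _ dens])
    qed
    have "prob Ties \<le> (\<Sum>i\<in>{..<n}. prob (\<Union>j\<in>{..<n}-{i}. {\<omega>\<in>space M. \<gamma> i i \<omega> = \<gamma> j j \<omega>}))"
      unfolding Ties_def by (rule finite_measure_subadditive_finite) auto
    also have "\<dots> \<le> (\<Sum>i\<in>{..<n}. \<Sum>j\<in>{..<n}-{i}. prob {\<omega>\<in>space M. \<gamma> i i \<omega> = \<gamma> j j \<omega>})"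
      by (intro sum_mono finite_measure_subadditive_finite) auto
    also have "\<dots> = 0" using z by (intro sum.neutral) auto
    finally show ?thesis using measure_nonneg[of M Ties] by linarith
  qed
  have pBad: "\<And>S. S \<in> SS \<Longrightarrow> prob (Bad S) \<le> exp (- real k / 4)"
  proof -
    fix S assume S: "S \<in> SS"
    have fS: "finite S" using SSfin[OF S] .
    have cS: "card S = k" using S by (simp add: SS_def)
    define K where "K = (\<lambda>i. (\<lambda>j. (j, i)) ` (S - {i}))"
    define hB where "hB = (\<lambda>i (g :: nat \<times> nat \<Rightarrow> real). if 8 * real k * \<mu> \<le> (\<Sum>j\<in>S-{i}. g (j, i)) then 1 else (0::real))"
    have "indep_vars (\<lambda>_. borel) (\<lambda>l \<omega>. hB l (restrict (\<lambda>p. X p \<omega>) (K l))) S"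
    proof (rule indep_groups[OF indX])
      show "disjoint_family_on K S" by (auto simp: disjoint_family_on_def K_def)
      fix l show "hB l \<in> borel_measurable (Pi\<^sub>M (K l) (\<lambda>_. borel))"
        unfolding hB_def K_def using fS by measurable
    qed
    moreover have "\<And>l. (\<lambda>\<omega>. hB l (restrict (\<lambda>p. X p \<omega>) (K l))) = Bi S l"
    proof -
      fix l
      have "\<And>\<omega>. (\<Sum>j\<in>S-{l}. restrict (\<lambda>p. X p \<omega>) (K l) (j, l)) = (\<Sum>j\<in>S-{l}. \<gamma> j l \<omega>)"
        by (intro sum.cong) (auto simp: K_def X_def)
      then show "(\<lambda>\<omega>. hB l (restrict (\<lambda>p. X p \<omega>) (K l))) = Bi S l"
        by (simp add: hB_def Bi_def fun_eq_iff)
    qed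
    ultimately have indB: "indep_vars (\<lambda>_. borel) (Bi S) S" by simp
    have b: "\<And>i \<omega>. i \<in> S \<Longrightarrow> Bi S i \<omega> = 0 \<or> Bi S i \<omega> = 1" by (auto simp: Bi_def)
    have p: "\<And>i. i \<in> S \<Longrightarrow> prob {\<omega>\<in>space M. Bi S i \<omega> = 1} \<le> 1/8"
    proof -
      fix i assume iS: "i \<in> S"
      have "{\<omega>\<in>space M. Bi S i \<omega> = 1} = {\<omega>\<in>space M. 8 * real k * \<mu> \<le> (\<Sum>j\<in>S-{i}. \<gamma> j i \<omega>)}"
        by (auto simp: Bi_def)
      also have "prob \<dots> \<le> real (card (S - {i})) * \<mu> / (8 * real k * \<mu>)"
        by (rule markov_sum) (use fS integ nonneg mean mu k1 in auto)
      also have "\<dots> \<le> real k * \<mu> / (8 * real k * \<mu>)"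
      proof -
        have "card (S - {i}) \<le> k" using cS fS by (metis card_Diff1_le)
        then show ?thesis using mu k1 by (intro divide_right_mono mult_right_mono) auto
      qed
      also have "\<dots> = 1/8" using mu k1 by (simp add: field_simps)
      finally show "prob {\<omega>\<in>space M. Bi S i \<omega> = 1} \<le> 1/8" .
    qed
    have "prob {\<omega>\<in>space M. real (card S) / 2 \<le> (\<Sum>i\<in>S. Bi S i \<omega>)} \<le> exp (- real (card S) / 4)"
      by (rule chernoff_upper[OF fS indB b p])
    then show "prob (Bad S) \<le> exp (- real k / 4)" unfolding Bad_def cS .
  qed
  have pDB: "\<And>S. S \<in> SS \<Longrightarrow> prob (Dst S \<inter> Bad S) \<le> prob (Dst S) * exp (- real k / 4)"
  proof -
    fix S assume S: "S \<in> SS"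
    have fS: "finite S" using SSfin[OF S] .
    have Sn: "S \<subseteq> {..<n}" using S by (simp add: SS_def)
    define A where "A = (\<lambda>i. (i, i)) ` {..<n}"
    define B where "B = {p. fst p \<in> S \<and> snd p \<in> S \<and> fst p \<noteq> snd p}"
    have AB: "A \<inter> B = {}" by (auto simp: A_def B_def)
    define U where "U = {g \<in> space (Pi\<^sub>M A (\<lambda>_. borel)). \<forall>i\<in>S. \<forall>j\<in>{..<n}-S. g (j, j) < (g (i, i) :: real)}"
    define V where "V = {g \<in> space (Pi\<^sub>M B (\<lambda>_. borel)). real k / 2 \<le> (\<Sum>i\<in>S. if 8 * real k * \<mu> \<le> (\<Sum>j\<in>S-{i}. g (j, i)) then 1 else (0::real))}"
    have Um: "U \<in> sets (Pi\<^sub>M A (\<lambda>_. borel))"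
      unfolding U_def using fS by measurable (use Sn in \<open>auto simp: A_def\<close>)
    have Vm: "V \<in> sets (Pi\<^sub>M B (\<lambda>_. borel))"
      unfolding V_def using fS by measurable (auto simp: B_def)
    have eqD: "{\<omega>\<in>space M. restrict (\<lambda>p. X p \<omega>) A \<in> U} = Dst S"
      using Sn by (auto simp: U_def Dst_def A_def X_def space_PiM)
    have eqB: "{\<omega>\<in>space M. restrict (\<lambda>p. X p \<omega>) B \<in> V} = Bad S"
    proof -
      have "\<And>\<omega> i. i \<in> S \<Longrightarrow> (\<Sum>j\<in>S-{i}. restrict (\<lambda>p. X p \<omega>) B (j, i)) = (\<Sum>j\<in>S-{i}. \<gamma> j i \<omega>)"
        by (intro sum.cong) (auto simp: B_def X_def)
      then have "\<And>\<omega>. (\<Sum>i\<in>S. if 8 * real k * \<mu> \<le> (\<Sum>j\<in>S-{i}. restrict (\<lambda>p. X p \<omega>) B (j, i)) then 1 else (0::real)) = (\<Sum>i\<in>S. Bi S i \<omega>)"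
        by (intro sum.cong) (auto simp: Bi_def)
      then show ?thesis by (auto simp: V_def Bad_def space_PiM)
    qed
    have "prob ({\<omega>\<in>space M. restrict (\<lambda>p. X p \<omega>) A \<in> U} \<inter> {\<omega>\<in>space M. restrict (\<lambda>p. X p \<omega>) B \<in> V})
       = prob {\<omega>\<in>space M. restrict (\<lambda>p. X p \<omega>) A \<in> U} * prob {\<omega>\<in>space M. restrict (\<lambda>p. X p \<omega>) B \<in> V}"
      by (rule indep_var_prob[OF indep_var_restrict[OF indX AB] Um Vm]) auto
    then have "prob (Dst S \<inter> Bad S) = prob (Dst S) * prob (Bad S)" unfolding eqD eqB .
    then show "prob (Dst S \<inter> Bad S) \<le> prob (Dst S) * exp (- real k / 4)"
      using pBad[OF S] by (simp add: mult_left_mono)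
  qed
  have disj: "disjoint_family_on Dst SS"
  proof (unfold disjoint_family_on_def, intro ballI impI)
    fix S S' assume S: "S \<in> SS" and S': "S' \<in> SS" and ne: "S \<noteq> S'"
    have fS: "finite S" and fS': "finite S'" using SSfin S S' by auto
    have cc: "card S = card S'" using S S' by (simp add: SS_def)
    have Sn: "S \<subseteq> {..<n}" and Sn': "S' \<subseteq> {..<n}" using S S' by (auto simp: SS_def)
    obtain i where i: "i \<in> S" "i \<notin> S'"
    proof (cases "S \<subseteq> S'")
      case True then have "S = S'" using card_subset_eq[OF fS' True] cc by simp
      then show ?thesis using ne by simp
    next
      case False then show ?thesis using that by blast
    qed
    obtain j where j: "j \<in> S'" "j \<notin> S"
    proof (cases "S' \<subseteq> S")
      case True then have "S' = S" using card_subset_eq[OF fS True] cc by simp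
      then show ?thesis using ne by simp
    next
      case False then show ?thesis using that by blast
    qed
    show "Dst S \<inter> Dst S' = {}"
    proof (rule ccontr)
      assume "Dst S \<inter> Dst S' \<noteq> {}"
      then obtain \<omega> where w: "\<omega> \<in> Dst S" "\<omega> \<in> Dst S'" by blast
      have "j \<in> {..<n} - S" using j Sn' by blast
      then have "\<gamma> j j \<omega> < \<gamma> i i \<omega>" using w(1) i(1) unfolding Dst_def by blast
      moreover have "i \<in> {..<n} - S'" using i Sn by blast
      then have "\<gamma> i i \<omega> < \<gamma> j j \<omega>" using w(2) j(1) unfolding Dst_def by blast
      ultimately show False by simp
    qed
  qed
  have sumD: "(\<Sum>S\<in>SS. prob (Dst S)) \<le> 1"
  proof -
    have "prob (\<Union>S\<in>SS. Dst S) = (\<Sum>S\<in>SS. prob (Dst S))"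
      by (rule finite_measure_finite_Union[OF fSS _ disj]) (use Dst_m in auto)
    then show ?thesis using prob_le_1 by metis
  qed
  have UDB_m: "(\<Union>S\<in>SS. Dst S \<inter> Bad S) \<in> events"
    using fSS Dst_m Bad_m by (intro sets.finite_UN) auto
  have "prob (space M - Good) \<le> prob (NA \<union> Ties \<union> (\<Union>S\<in>SS. Dst S \<inter> Bad S))"
    by (rule finite_measure_mono[OF incl]) (use NA_m Ties_m UDB_m in auto)
  also have "\<dots> \<le> prob (NA \<union> Ties) + prob (\<Union>S\<in>SS. Dst S \<inter> Bad S)"
    by (rule measure_Un_le) (use NA_m Ties_m UDB_m in auto)
  also have "prob (NA \<union> Ties) \<le> prob NA + prob Ties"
    by (rule measure_Un_le) (use NA_m Ties_m in auto)
  also have "prob (\<Union>S\<in>SS. Dst S \<inter> Bad S) \<le> (\<Sum>S\<in>SS. prob (Dst S \<inter> Bad S))"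
    by (rule finite_measure_subadditive_finite[OF fSS]) (use Dst_m Bad_m in auto)
  also have "\<dots> \<le> (\<Sum>S\<in>SS. prob (Dst S) * exp (- real k / 4))"
    by (rule sum_mono) (rule pDB)
  also have "\<dots> = exp (- real k / 4) * (\<Sum>S\<in>SS. prob (Dst S))"
    by (simp add: sum_distrib_right mult.commute)
  also have "\<dots> \<le> exp (- real k / 4) * 1"
    using sumD by (intro mult_left_mono) auto
  finally have "prob (space M - Good) \<le> prob NA + prob Ties + exp (- real k / 4)" by simp
  then have "prob (space M - Good) \<le> exp (- real k) + exp (- real k / 4)"
    using pNA pTies by linarith
  moreover have "prob (space M - Good) = 1 - prob Good" by (rule prob_compl[OF Good_m])
  ultimately show ?thesis using Good_m by simp
qed

end


theorem theorem1:
  fixes M :: "'a measure"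
    and \<gamma> :: "nat \<Rightarrow> nat \<Rightarrow> 'a \<Rightarrow> real"
    and f F :: "real \<Rightarrow> real"
    and \<mu> \<beta> N0 :: real
  assumes "prob_space M"
    and indep: "prob_space.indep_vars M (\<lambda>_. borel) (\<lambda>(i, j). \<gamma> i j) UNIV"
    and nonneg: "\<And>i j \<omega>. \<gamma> i j \<omega> \<ge> 0"
    and f_nonneg: "\<And>x. f x \<ge> 0"
    and density: "\<And>i j. distributed M lborel (\<gamma> i j) (\<lambda>x. ennreal (f x))"
    and cdf: "\<And>i j x. measure M {\<omega> \<in> space M. \<gamma> i j \<omega> \<le> x} = F x"
    and integ: "\<And>i j. integrable M (\<gamma> i j)"
    and mean: "\<And>i j. integral\<^sup>L M (\<gamma> i j) = \<mu>"
    and "\<beta> > 0" and "N0 \<ge> 0"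
    and cond1: "condition_set_1 f F"
    and type: "NHT_type M (\<gamma> 0 0) \<or> HT_type F"
  shows "\<exists>k :: nat \<Rightarrow> nat. \<exists>c > 0. (\<forall>n. k n \<le> n) \<and>
    ((\<lambda>n. measure M {\<omega> \<in> space M. \<forall>S. top_set (\<lambda>i j. \<gamma> i j \<omega>) n (k n) S \<longrightarrow>
         c * Ginv F \<beta> \<mu> (real n) \<le> real (throughput (\<lambda>i j. \<gamma> i j \<omega>) N0 \<beta> S)})
      \<longlonglongrightarrow> 1)"
proof -
  interpret P: prob_space M by (rule assms(1))
  have beta: "\<beta> > 0" by fact
  have rv[measurable]: "\<And>i j. \<gamma> i j \<in> borel_measurable M"
  proof -
    fix i j
    have "(\<lambda>(i, j). \<gamma> i j) (i,j) \<in> borel_measurable M" using indep by (auto simp: P.indep_vars_def)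
    then show "\<gamma> i j \<in> borel_measurable M" by simp
  qed
  have Fd: "\<And>x. F x = P.prob {\<omega>\<in>space M. \<gamma> 0 0 \<omega> \<le> x}" using cdf by simp
  have Fmono: "\<And>x y. x \<le> y \<Longrightarrow> F x \<le> F y"
  proof -
    fix x y :: real assume "x \<le> y"
    then have "{\<omega>\<in>space M. \<gamma> 0 0 \<omega> \<le> x} \<subseteq> {\<omega>\<in>space M. \<gamma> 0 0 \<omega> \<le> y}" by auto
    moreover have "{\<omega>\<in>space M. \<gamma> 0 0 \<omega> \<le> y} \<in> sets M" by measurable
    ultimately show "F x \<le> F y" unfolding Fd by (rule P.finite_measure_mono)
  qed
  have Fge0: "\<And>x. 0 \<le> F x" unfolding Fd by simp
  have Flt1: "\<And>x. F x < 1" using cond1 by (simp add: condition_set_1_def)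
  have mupos: "\<mu> > 0"
  proof (rule ccontr)
    assume nmu: "\<not> \<mu> > 0"
    have "0 \<le> \<mu>" using mean[of 0 0] Bochner_Integration.integral_nonneg[of M "\<gamma> 0 0"] nonneg by simp
    then have mu0: "\<mu> = 0" using nmu by simp
    have ae: "AE \<omega> in M. \<gamma> 0 0 \<omega> = 0"
      using integral_nonneg_eq_0_iff_AE[OF integ[of 0 0]] nonneg mean[of 0 0] mu0 by simp
    have "AE \<omega> in M. \<omega> \<in> {\<omega>\<in>space M. \<gamma> 0 0 \<omega> \<le> 0}"
      using ae AE_space by eventually_elim auto
    moreover have "{\<omega>\<in>space M. \<gamma> 0 0 \<omega> \<le> 0} \<in> sets M" by measurable
    ultimately have "P.prob {\<omega>\<in>space M. \<gamma> 0 0 \<omega> \<le> 0} = 1" using P.prob_eq_1 by blast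
    then have "F 0 = 1" using Fd by simp
    then show False using Flt1[of 0] by simp
  qed
  define Ts where "Ts = (\<lambda>y. {x. x \<ge> 0 \<and> Gfun F \<beta> \<mu> x \<ge> y})"
  have GI: "\<And>y. Ginv F \<beta> \<mu> y = Inf (Ts y)" by (simp add: Ginv_def Ts_def)
  have bdd: "\<And>y. bdd_below (Ts y)" unfolding Ts_def by (rule bdd_belowI[of _ 0]) auto
  have Tne: "\<And>y. 0 \<le> y \<Longrightarrow> y \<in> Ts y"
  proof -
    fix y :: real assume y: "0 \<le> y"
    have d: "0 < 1 - F (\<beta> * \<mu> * y / 2)" "1 - F (\<beta> * \<mu> * y / 2) \<le> 1" using Flt1 Fge0 by (auto simp: less_le)
    have "y * (1 - F (\<beta> * \<mu> * y / 2)) \<le> y" using d y by (simp add: mult_left_le)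
    then have "y \<le> y / (1 - F (\<beta> * \<mu> * y / 2))" using d by (simp add: le_divide_eq)
    then show "y \<in> Ts y" using y by (simp add: Ts_def Gfun_def)
  qed
  have Ginv_le: "\<And>y. 0 \<le> y \<Longrightarrow> Ginv F \<beta> \<mu> y \<le> y"
    unfolding GI by (rule cInf_lower[OF Tne bdd])
  have Ginv_nn: "\<And>y. 0 \<le> y \<Longrightarrow> 0 \<le> Ginv F \<beta> \<mu> y"
    unfolding GI by (rule cInf_greatest) (use Tne in \<open>auto simp: Ts_def\<close>)
  have Ginv_ge: "\<And>y X. 0 \<le> X \<Longrightarrow> X / (1 - F (\<beta> * \<mu> * X / 2)) < y \<Longrightarrow> X \<le> Ginv F \<beta> \<mu> y"
  proof -
    fix y X :: real assume X: "0 \<le> X" and yb: "X / (1 - F (\<beta> * \<mu> * X / 2)) < y"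
    have dX: "0 < 1 - F (\<beta> * \<mu> * X / 2)" using Flt1 by simp
    have "0 \<le> X / (1 - F (\<beta> * \<mu> * X / 2))" using X dX by simp
    then have y0: "0 \<le> y" using yb by linarith
    show "X \<le> Ginv F \<beta> \<mu> y"
      unfolding GI
    proof (rule cInf_greatest)
      show "Ts y \<noteq> {}" using Tne[OF y0] by blast
      fix x assume x: "x \<in> Ts y"
      show "X \<le> x"
      proof (rule ccontr)
        assume "\<not> X \<le> x"
        then have xX: "x \<le> X" by simp
        have x0: "0 \<le> x" using x by (simp add: Ts_def)
        have "\<beta> * \<mu> * x / 2 \<le> \<beta> * \<mu> * X / 2"
          using xX beta mupos by (intro divide_right_mono mult_left_mono) auto
        then have "1 - F (\<beta> * \<mu> * X / 2) \<le> 1 - F (\<beta> * \<mu> * x / 2)" using Fmono by smt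
        then have "x / (1 - F (\<beta> * \<mu> * x / 2)) \<le> X / (1 - F (\<beta> * \<mu> * X / 2))"
          by (rule frac_le[OF X xX dX])
        moreover have "y \<le> x / (1 - F (\<beta> * \<mu> * x / 2))" using x by (simp add: Ts_def Gfun_def)
        ultimately show False using yb by linarith
      qed
    qed
  qed
  have Ginv_half: "\<And>y. 0 < Ginv F \<beta> \<mu> y \<Longrightarrow> Ginv F \<beta> \<mu> y / 2 < y * (1 - F (\<beta> * \<mu> * Ginv F \<beta> \<mu> y / 4))"
  proof -
    fix y assume L: "0 < Ginv F \<beta> \<mu> y"
    define x where "x = Ginv F \<beta> \<mu> y / 2"
    have "x \<notin> Ts y"
    proof
      assume "x \<in> Ts y"
      then have "Ginv F \<beta> \<mu> y \<le> x" unfolding GI by (rule cInf_lower[OF _ bdd])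
      then show False using L by (simp add: x_def)
    qed
    moreover have "0 \<le> x" using L by (simp add: x_def)
    ultimately have "x / (1 - F (\<beta> * \<mu> * x / 2)) < y" by (simp add: Ts_def Gfun_def)
    moreover have "0 < 1 - F (\<beta> * \<mu> * x / 2)" using Flt1 by simp
    ultimately have "x < y * (1 - F (\<beta> * \<mu> * x / 2))" by (simp add: pos_divide_less_eq)
    moreover have "\<beta> * \<mu> * x / 2 = \<beta> * \<mu> * Ginv F \<beta> \<mu> y / 4" by (simp add: x_def)
    ultimately show "Ginv F \<beta> \<mu> y / 2 < y * (1 - F (\<beta> * \<mu> * Ginv F \<beta> \<mu> y / 4))" by (simp add: x_def)
  qed
  define Lg where "Lg = (\<lambda>n::nat. Ginv F \<beta> \<mu> (real n))"
  have Lg_inf: "\<And>Z. eventually (\<lambda>n. Z \<le> Lg n) sequentially"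
  proof -
    fix Z :: real
    define X where "X = max Z 0"
    have "eventually (\<lambda>n. X / (1 - F (\<beta> * \<mu> * X / 2)) + 1 \<le> real n) sequentially"
      using filterlim_real_sequentially unfolding filterlim_at_top by blast
    then show "eventually (\<lambda>n. Z \<le> Lg n) sequentially"
    proof eventually_elim
      case (elim n)
      have "X \<le> Lg n" unfolding Lg_def by (rule Ginv_ge) (use elim in \<open>auto simp: X_def\<close>)
      then show ?case by (simp add: X_def)
    qed
  qed
  define kf where "kf = (\<lambda>n. nat \<lfloor>Lg n / 64\<rfloor>)"
  define c :: real where "c = 1/256"
  have kf_le: "\<And>n. kf n \<le> n"
  proof -
    fix n
    have "Lg n \<le> real n" unfolding Lg_def by (rule Ginv_le) simp
    then have "\<lfloor>Lg n / 64\<rfloor> \<le> int n" by linarith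
    then show "kf n \<le> n" unfolding kf_def by linarith
  qed
  have kf_inf: "\<And>Z. eventually (\<lambda>n. Z \<le> real (kf n)) sequentially"
  proof -
    fix Z :: real
    show "eventually (\<lambda>n. Z \<le> real (kf n)) sequentially"
      using Lg_inf[of "64 * (\<bar>Z\<bar> + 1)"]
    proof eventually_elim
      case (elim n)
      then have "\<bar>Z\<bar> + 1 \<le> Lg n / 64" by simp
      then have "Z \<le> real_of_int \<lfloor>Lg n / 64\<rfloor>" by linarith
      moreover have "0 \<le> \<lfloor>Lg n / 64\<rfloor>" using elim by simp
      ultimately show ?case by (simp add: kf_def)
    qed
  qed
  define Pn where "Pn = (\<lambda>n. measure M {\<omega> \<in> space M. \<forall>S. top_set (\<lambda>i j. \<gamma> i j \<omega>) n (kf n) S \<longrightarrow>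
         c * Ginv F \<beta> \<mu> (real n) \<le> real (throughput (\<lambda>i j. \<gamma> i j \<omega>) N0 \<beta> S)})"
  have lower: "eventually (\<lambda>n. 1 - exp (- real (kf n)) - exp (- real (kf n) / 4) \<le> Pn n) sequentially"
    using Lg_inf[of "max 128 (8 * N0 / \<mu>)"]
  proof eventually_elim
    case (elim n)
    define L where "L = Lg n"
    have L128: "128 \<le> L" and LN: "8 * N0 / \<mu> \<le> L" using elim by (auto simp: L_def)
    have fl0: "0 \<le> \<lfloor>L / 64\<rfloor>" using L128 by simp
    have rk: "real (kf n) = real_of_int \<lfloor>L / 64\<rfloor>" using fl0 by (simp add: kf_def L_def)
    have kup: "real (kf n) \<le> L / 64" using rk by linarith
    have klo: "L / 64 - 1 < real (kf n)" using rk by linarith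
    have k1: "1 \<le> kf n" using klo L128 by linarith
    define \<theta> where "\<theta> = \<beta> * (N0 + 8 * real (kf n) * \<mu>)"
    have N0L: "N0 \<le> \<mu> * L / 8" using LN mupos by (simp add: field_simps)
    have "8 * real (kf n) * \<mu> \<le> \<mu> * L / 8" using kup mupos by (simp add: field_simps)
    then have "N0 + 8 * real (kf n) * \<mu> \<le> \<mu> * L / 4" using N0L by linarith
    then have "\<theta> \<le> \<beta> * (\<mu> * L / 4)" unfolding \<theta>_def using beta by (intro mult_left_mono) auto
    then have "\<theta> \<le> \<beta> * \<mu> * L / 4" by simp
    then have Fth: "F \<theta> \<le> F (\<beta> * \<mu> * L / 4)" by (rule Fmono)
    have "L / 2 < real n * (1 - F (\<beta> * \<mu> * L / 4))"
      unfolding L_def Lg_def by (rule Ginv_half) (use L128 in \<open>simp add: L_def Lg_def\<close>)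
    moreover have "real n * (1 - F (\<beta> * \<mu> * L / 4)) \<le> real n * (1 - F \<theta>)"
      using Fth by (intro mult_left_mono) auto
    ultimately have nF: "4 * real (kf n) \<le> real n * (1 - F \<theta>)" using kup L128 by linarith
    have cG: "c * Ginv F \<beta> \<mu> (real n) \<le> real (kf n) / 2"
      using klo L128 by (simp add: c_def L_def Lg_def field_simps)
    have "{\<omega>\<in>space M. \<forall>S. top_set (\<lambda>i j. \<gamma> i j \<omega>) n (kf n) S \<longrightarrow> c * Ginv F \<beta> \<mu> (real n) \<le> real (throughput (\<lambda>i j. \<gamma> i j \<omega>) N0 \<beta> S)} \<in> sets M \<and>
       1 - exp (- real (kf n)) - exp (- real (kf n) / 4) \<le> P.prob {\<omega>\<in>space M. \<forall>S. top_set (\<lambda>i j. \<gamma> i j \<omega>) n (kf n) S \<longrightarrow> c * Ginv F \<beta> \<mu> (real n) \<le> real (throughput (\<lambda>i j. \<gamma> i j \<omega>) N0 \<beta> S)}"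
      by (rule P.main_bound[OF indep nonneg density cdf integ mean mupos _ k1 \<theta>_def nF cG]) (use beta in simp)
    then show ?case unfolding Pn_def by simp
  qed
  have upper: "eventually (\<lambda>n. Pn n \<le> 1) sequentially" unfolding Pn_def by simp
  have e1: "((\<lambda>n. exp (- real (kf n))) \<longlongrightarrow> 0) sequentially"
  proof -
    have "filterlim (\<lambda>n. real (kf n)) at_top sequentially"
      unfolding filterlim_at_top using kf_inf by blast
    then have "filterlim (\<lambda>n. - real (kf n)) at_bot sequentially"
      by (simp add: filterlim_uminus_at_top)
    from filterlim_compose[OF exp_at_bot this] show ?thesis .
  qed
  have e2: "((\<lambda>n. exp (- real (kf n) / 4)) \<longlongrightarrow> 0) sequentially"
  proof -
    have "\<And>Z. eventually (\<lambda>n. Z \<le> real (kf n) / 4) sequentially"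
    proof -
      fix Z :: real
      show "eventually (\<lambda>n. Z \<le> real (kf n) / 4) sequentially"
        using kf_inf[of "4 * Z"] by eventually_elim simp
    qed
    then have "filterlim (\<lambda>n. real (kf n) / 4) at_top sequentially"
      unfolding filterlim_at_top by blast
    then have "filterlim (\<lambda>n. - (real (kf n) / 4)) at_bot sequentially"
      by (simp add: filterlim_uminus_at_top)
    from filterlim_compose[OF exp_at_bot this] show ?thesis by simp
  qed
  have lim_lb: "((\<lambda>n. 1 - exp (- real (kf n)) - exp (- real (kf n) / 4)) \<longlongrightarrow> 1) sequentially"
    using tendsto_diff[OF tendsto_diff[OF tendsto_const e1] e2] by simp
  have "Pn \<longlonglongrightarrow> 1"
    by (rule tendsto_sandwich[OF lower upper lim_lb tendsto_const])
  moreover have "c > 0" by (simp add: c_def)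
  ultimately show ?thesis using kf_le unfolding Pn_def by blast
qed

end
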